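(* Let $\tau,t\in\mathbb{R}$ and let $\beta_n=\beta_n(\tau,t)$, $n\ge1$, be the recurrence coefficients of the monic orthogonal polynomials for the weight $\omega(x;\tau,t)=\exp(-x^6+\tau x^4+tx^2)$ on $\mathbb{R}$. Then $$\lim_{n\to\infty}\frac{\beta_n}{n^{1/3}}=\frac{1}{\sqrt[3]{60}}.$$
   Context: The monic polynomials $P_n(x)$ of exact degree $n$ satisfy $\int_{-\infty}^{\infty}P_m(x)P_n(x)\,\omega(x;\tau,t)\,dx=h_n\delta_{mn}$ with $h_n>0$. Since the weight is even, they satisfy the three-term recurrence $P_{n+1}(x)=xP_n(x)-\beta_nP_{n-1}(x)$ with $P_{-1}=0$, $P_0=1$, and $\beta_n=h_n/h_{n-1}>0$ for $n\ge1$. *)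

theory Defs
  imports "HOL-Analysis.Analysis" "HOL-Computational_Algebra.Polynomial"
begin

definition omega :: "real \<Rightarrow> real \<Rightarrow> real \<Rightarrow> real" where
  "omega \<tau> t x = exp (- (x ^ 6) + \<tau> * x ^ 4 + t * x ^ 2)"

definition wip :: "real \<Rightarrow> real \<Rightarrow> real poly \<Rightarrow> real poly \<Rightarrow> real" where
  "wip \<tau> t p q = (LINT x|lborel. poly p x * poly q x * omega \<tau> t x)"

definition monic_OPS :: "real \<Rightarrow> real \<Rightarrow> (nat \<Rightarrow> real poly) \<Rightarrow> bool" where
  "monic_OPS \<tau> t P \<longleftrightarrow>
     (\<forall>n. degree (P n) = n \<and> lead_coeff (P n) = 1) \<and>
     (\<forall>m n. m \<noteq> n \<longrightarrow> wip \<tau> t (P m) (P n) = 0)"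

definition hnorm :: "real \<Rightarrow> real \<Rightarrow> (nat \<Rightarrow> real poly) \<Rightarrow> nat \<Rightarrow> real" where
  "hnorm \<tau> t P n = wip \<tau> t (P n) (P n)"

text \<open>Recurrence coefficient beta_n = h_n / h_(n-1), meaningful for n \<ge> 1.\<close>
definition rbeta :: "real \<Rightarrow> real \<Rightarrow> (nat \<Rightarrow> real poly) \<Rightarrow> nat \<Rightarrow> real" where
  "rbeta \<tau> t P n = hnorm \<tau> t P n / hnorm \<tau> t P (n - 1)"

end

theory Submission
  imports Defs "HOL-Probability.Distributions" "HOL-Real_Asymp.Real_Asymp"
begin

lemma cubic_bound:
  fixes a b y :: real assumes y: "0 \<le> y"
  shows "- (y^3) + a * y^2 + b * y \<le> \<bar>a\<bar> * (\<bar>a\<bar>+\<bar>b\<bar>+1)^2 + \<bar>b\<bar> * (\<bar>a\<bar>+\<bar>b\<bar>+1)"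
proof (cases "y \<le> \<bar>a\<bar>+\<bar>b\<bar>+1")
  case True
  have "a * y^2 \<le> \<bar>a\<bar> * (\<bar>a\<bar>+\<bar>b\<bar>+1)^2"
    by (metis True abs_ge_self abs_ge_zero mult_mono power_mono y zero_le_power2)
  moreover have "b * y \<le> \<bar>b\<bar> * (\<bar>a\<bar>+\<bar>b\<bar>+1)"
    by (metis True abs_ge_self abs_ge_zero mult_mono y)
  moreover have "0 \<le> y^3" using y by simp
  ultimately show ?thesis by linarith
next
  case False
  then have y1: "y \<ge> 1" by linarith
  have "y^3 = y * y^2" by (simp add: power2_eq_square power3_eq_cube)
  also have "\<dots> \<ge> (\<bar>a\<bar>+\<bar>b\<bar>+1) * y^2" using False by (intro mult_right_mono) auto
  finally have h: "y^3 \<ge> (\<bar>a\<bar>+\<bar>b\<bar>+1) * y^2" .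
  have "(\<bar>a\<bar>+\<bar>b\<bar>+1) * y^2 = \<bar>a\<bar> * y^2 + \<bar>b\<bar> * y^2 + y^2" by (simp add: algebra_simps)
  then have "y^3 \<ge> \<bar>a\<bar> * y^2 + \<bar>b\<bar> * y^2" using h zero_le_power2[of y] by linarith
  moreover have "\<bar>b\<bar> * y \<le> \<bar>b\<bar> * y^2" using y1 by (intro mult_left_mono) (auto simp: power2_eq_square)
  moreover have "a * y^2 \<le> \<bar>a\<bar> * y^2" by (intro mult_right_mono) auto
  moreover have "b * y \<le> \<bar>b\<bar> * y" using y by (intro mult_right_mono) auto
  moreover have "0 \<le> \<bar>a\<bar> * (\<bar>a\<bar>+\<bar>b\<bar>+1)^2 + \<bar>b\<bar> * (\<bar>a\<bar>+\<bar>b\<bar>+1)" by simp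
  ultimately show ?thesis by linarith
qed

lemma omega_pos: "omega \<tau> t x > 0" by (simp add: omega_def)
lemma omega_even: "omega \<tau> t (-x) = omega \<tau> t x" by (simp add: omega_def)
lemma omega_cont: "continuous_on UNIV (omega \<tau> t)" unfolding omega_def by (intro continuous_intros)
lemma omega_meas[measurable]: "omega \<tau> t \<in> borel_measurable borel"
  by (rule borel_measurable_continuous_onI[OF omega_cont])

lemma omega_le: "\<exists>C. \<forall>x. omega \<tau> t x \<le> C * exp (- (x^2) / 2)"
proof -
  define A where "A = \<bar>\<tau>\<bar> * (\<bar>\<tau>\<bar>+\<bar>t+1/2\<bar>+1)^2 + \<bar>t+1/2\<bar> * (\<bar>\<tau>\<bar>+\<bar>t+1/2\<bar>+1)"
  show ?thesis
  proof (intro exI allI)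
    fix x :: real
    have "- ((x^2)^3) + \<tau> * (x^2)^2 + (t+1/2) * x^2 \<le> A"
      unfolding A_def by (rule cubic_bound) simp
    then have "- (x ^ 6) + \<tau> * x ^ 4 + t * x ^ 2 \<le> A + (- (x^2)/2)"
      by (simp add: power_mult[symmetric] algebra_simps)
    then have "omega \<tau> t x \<le> exp (A + (- (x^2)/2))" unfolding omega_def by simp
    also have "\<dots> = exp A * exp (- (x^2)/2)" by (subst exp_add[symmetric]) simp
    finally show "omega \<tau> t x \<le> exp A * exp (- (x^2)/2)" .
  qed
qed

lemma integrable_xk: "integrable lborel (\<lambda>x. x ^ k * omega \<tau> t x)"
proof -
  obtain C where C: "\<And>x. omega \<tau> t x \<le> C * exp (- (x^2) / 2)" using omega_le by blast
  have "integrable lborel (\<lambda>x. (C * sqrt (2*pi)) * (std_normal_density x * \<bar>x\<bar>^k))"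
    by (intro integrable_mult_right integrable_std_normal_moment_abs)
  then show ?thesis
  proof (rule Bochner_Integration.integrable_bound)
    show "AE x in lborel. norm (x ^ k * omega \<tau> t x) \<le> norm ((C * sqrt (2*pi)) * (std_normal_density x * \<bar>x\<bar>^k))"
    proof (intro AE_I2)
      fix x :: real
      have "norm (x ^ k * omega \<tau> t x) = \<bar>x\<bar>^k * omega \<tau> t x"
        using omega_pos[of \<tau> t x] by (simp add: abs_mult power_abs)
      also have "\<dots> \<le> \<bar>x\<bar>^k * (C * exp (- (x^2) / 2))" by (intro mult_left_mono C) auto
      also have "\<dots> = (C * sqrt (2*pi)) * (std_normal_density x * \<bar>x\<bar>^k)"
        by (simp add: std_normal_density_def)
      also have "\<dots> \<le> norm \<dots>" by simp
      finally show "norm (x ^ k * omega \<tau> t x) \<le> norm ((C * sqrt (2*pi)) * (std_normal_density x * \<bar>x\<bar>^k))" .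
    qed
  qed measurable
qed

lemma integrable_poly: "integrable lborel (\<lambda>x. poly p x * omega \<tau> t x)"
proof -
  have "integrable lborel (\<lambda>x. \<Sum>i\<le>degree p. coeff p i * (x ^ i * omega \<tau> t x))"
    by (rule Bochner_Integration.integrable_sum) (intro integrable_mult_right integrable_xk)
  then show ?thesis by (simp add: poly_altdef sum_distrib_right mult.assoc)
qed

lemma integrable_poly2: "integrable lborel (\<lambda>x. poly p x * poly q x * omega \<tau> t x)"
  using integrable_poly[of "p*q" \<tau> t] by simp

lemma wip_poly: "wip \<tau> t p q = (LINT x|lborel. poly (p*q) x * omega \<tau> t x)"
  by (simp add: wip_def)

lemma wip_sym: "wip \<tau> t p q = wip \<tau> t q p"
  by (simp add: wip_def mult.commute)

lemma wip_add_left: "wip \<tau> t (p + r) q = wip \<tau> t p q + wip \<tau> t r q"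
  unfolding wip_def poly_add distrib_right by (rule Bochner_Integration.integral_add[OF integrable_poly2 integrable_poly2])

lemma wip_add_right: "wip \<tau> t q (p + r) = wip \<tau> t q p + wip \<tau> t q r"
  by (metis wip_add_left wip_sym)

lemma wip_smult_left: "wip \<tau> t (smult c p) q = c * wip \<tau> t p q"
  unfolding wip_poly by (simp add: mult.assoc)

lemma wip_smult_right: "wip \<tau> t q (smult c p) = c * wip \<tau> t q p"
  by (metis wip_smult_left wip_sym)

lemma wip_diff_left: "wip \<tau> t (p - r) q = wip \<tau> t p q - wip \<tau> t r q"
proof -
  have "p - r = p + smult (-1) r" by simp
  then show ?thesis by (simp only: wip_add_left wip_smult_left)
qed

lemma wip_diff_right: "wip \<tau> t q (p - r) = wip \<tau> t q p - wip \<tau> t q r"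
  by (metis wip_diff_left wip_sym)

lemma wip_zero_left[simp]: "wip \<tau> t 0 q = 0" by (simp add: wip_def)
lemma wip_zero_right[simp]: "wip \<tau> t q 0 = 0" by (simp add: wip_def)

lemma wip_X: "wip \<tau> t ([:0,1:] * p) q = wip \<tau> t p ([:0,1:] * q)"
  unfolding wip_poly by (simp add: ac_simps)

lemma wip_pos: assumes "p \<noteq> 0" shows "wip \<tau> t p p > 0"
proof -
  have nn: "AE x in lborel. 0 \<le> poly (p*p) x * omega \<tau> t x"
    using omega_pos[of \<tau> t] by (intro AE_I2) (simp add: order_less_imp_le)
  have ge: "wip \<tau> t p p \<ge> 0" unfolding wip_poly
    using omega_pos[of \<tau> t] by (intro integral_nonneg_AE AE_I2) (simp add: order_less_imp_le)
  have "wip \<tau> t p p \<noteq> 0"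
  proof
    assume "wip \<tau> t p p = 0"
    then have "AE x in lborel. poly (p*p) x * omega \<tau> t x = 0"
      unfolding wip_poly using integral_nonneg_eq_0_iff_AE[OF integrable_poly nn] by simp
    then have A1: "AE x in lborel. x \<in> {x. poly p x = 0}"
    proof eventually_elim
      case (elim x) then show ?case using omega_pos[of \<tau> t x] by simp
    qed
    have "finite {x. poly p x = 0}" using assms by (rule poly_roots_finite)
    then have "{x. poly p x = 0} \<in> null_sets lborel"
      by (intro countable_imp_null_set_lborel countable_finite)
    then have A2: "AE x in lborel. x \<notin> {x. poly p x = 0}" by (rule AE_not_in)
    have "AE x in lborel. (x \<in> {x. poly p x = 0} \<and> x \<notin> {x. poly p x = 0})"
      by (rule AE_conjI[OF A1 A2])
    then have "AE x::real in lborel. False" by simp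
    then show False using AE_iff_measurable[of UNIV lborel "\<lambda>x::real. False"] by simp
  qed
  with ge show ?thesis by simp
qed


lemma integral_reflect: fixes f :: "real \<Rightarrow> real" shows "(LINT x|lborel. f (-x)) = (LINT x|lborel. f x)"
  using lborel_integral_real_affine[where c="-1" and t=0 and f=f] by simp

lemma poly_reflect: fixes p :: "real poly" shows "poly (p \<circ>\<^sub>p [:0,-1:]) x = poly p (-x)"
proof -
  have "poly [:0,-1:] x = - x" by simp
  then show ?thesis by (simp only: poly_pcompose)
qed

lemma wip_reflect: "wip \<tau> t (p \<circ>\<^sub>p [:0,-1:]) (q \<circ>\<^sub>p [:0,-1:]) = wip \<tau> t p q"
  unfolding wip_def poly_reflect
  using integral_reflect[of "\<lambda>x. poly p x * poly q x * omega \<tau> t x"] by (simp add: omega_even)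

definition Vp :: "real \<Rightarrow> real \<Rightarrow> real poly" where
  "Vp \<tau> t = [:0, -2*t, 0, -4*\<tau>, 0, 6:]"

lemma poly_Vp: "poly (Vp \<tau> t) x = 6 * x^5 - 4 * \<tau> * x^3 - 2 * t * x"
  by (simp add: Vp_def algebra_simps power_def)

lemma omega_deriv: "(omega \<tau> t has_real_derivative (- poly (Vp \<tau> t) x * omega \<tau> t x)) (at x)"
  unfolding omega_def poly_Vp
  by (auto intro!: derivative_eq_intros simp: algebra_simps power_def)

lemma poly_omega_lim_top: "((\<lambda>x. poly f x * omega \<tau> t x) \<longlongrightarrow> 0) at_top"
proof -
  have "((\<lambda>x. \<Sum>i\<le>degree f. coeff f i * (x ^ i * omega \<tau> t x)) \<longlongrightarrow> (\<Sum>i\<le>degree f. coeff f i * 0)) at_top"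
    by (intro tendsto_intros) (unfold omega_def, real_asymp)
  then show ?thesis by (simp add: poly_altdef sum_distrib_right mult.assoc)
qed

lemma poly_omega_lim_bot: "((\<lambda>x. poly f x * omega \<tau> t x) \<longlongrightarrow> 0) at_bot"
proof -
  have "((\<lambda>x. \<Sum>i\<le>degree f. coeff f i * (x ^ i * omega \<tau> t x)) \<longlongrightarrow> (\<Sum>i\<le>degree f. coeff f i * 0)) at_bot"
    by (intro tendsto_intros) (unfold omega_def, real_asymp)
  then show ?thesis by (simp add: poly_altdef sum_distrib_right mult.assoc)
qed

lemma IBP: "(LINT x|lborel. poly (pderiv f) x * omega \<tau> t x) = (LINT x|lborel. poly (f * Vp \<tau> t) x * omega \<tau> t x)"
proof -
  define g where "g x = poly (pderiv f - f * Vp \<tau> t) x * omega \<tau> t x" for x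
  define F where "F x = poly f x * omega \<tau> t x" for x
  have "(LBINT x=-\<infinity>..\<infinity>. g x) = 0 - 0"
  proof (rule interval_integral_FTC_integrable[where F=F])
    fix x :: real
    show "(F has_vector_derivative g x) (at x)"
    proof -
      have "((\<lambda>x. poly f x * omega \<tau> t x) has_real_derivative
             (poly f x * (- poly (Vp \<tau> t) x * omega \<tau> t x) + poly (pderiv f) x * omega \<tau> t x)) (at x)"
        by (rule DERIV_mult'[OF poly_DERIV omega_deriv])
      moreover have "poly f x * (- poly (Vp \<tau> t) x * omega \<tau> t x) + poly (pderiv f) x * omega \<tau> t x = g x"
        unfolding g_def poly_diff poly_mult by (simp add: algebra_simps)
      ultimately show ?thesis
        unfolding has_real_derivative_iff_has_vector_derivative[symmetric] F_def by simp
    qed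
    have "isCont (\<lambda>x. poly (pderiv f - f * Vp \<tau> t) x * omega \<tau> t x) x"
      by (intro isCont_mult poly_isCont) (simp add: omega_def)
    then show "isCont g x" unfolding g_def[abs_def] .
  next
    show "set_integrable lborel (einterval (- \<infinity>) \<infinity>) g"
      unfolding einterval_eq_UNIV set_integrable_def g_def[abs_def] using integrable_poly[of "pderiv f - f * Vp \<tau> t" \<tau> t] by simp
    show "((F \<circ> real_of_ereal) \<longlongrightarrow> 0) (at_right (- \<infinity>))"
      unfolding ereal_tendsto_simps1 F_def by (rule poly_omega_lim_bot)
    show "((F \<circ> real_of_ereal) \<longlongrightarrow> 0) (at_left \<infinity>)"
      unfolding ereal_tendsto_simps1 F_def by (rule poly_omega_lim_top)
  qed simp
  then have "(LINT x|lborel. g x) = 0"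
    by (simp add: interval_lebesgue_integral_def set_lebesgue_integral_def einterval_eq_UNIV)
  moreover have "(LINT x|lborel. g x) = (LINT x|lborel. poly (pderiv f) x * omega \<tau> t x) - (LINT x|lborel. poly (f * Vp \<tau> t) x * omega \<tau> t x)"
    unfolding g_def poly_diff[of "pderiv f"] left_diff_distrib
    by (rule Bochner_Integration.integral_diff[OF integrable_poly integrable_poly])
  ultimately show ?thesis by simp
qed


lemma wip_X': "wip \<tau> t (pCons 0 p) q = wip \<tau> t p (pCons 0 q)"
  using wip_X[of \<tau> t p q] by simp

lemma wip_reflect1: "wip \<tau> t (p \<circ>\<^sub>p [:0,-1:]) q = wip \<tau> t p (q \<circ>\<^sub>p [:0,-1:])"
proof -
  have "(q \<circ>\<^sub>p [:0,-1:]) \<circ>\<^sub>p [:0,-1:] = q"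
    by (simp add: pcompose_assoc[symmetric] pcompose_pCons)
  then show ?thesis using wip_reflect[of \<tau> t p "q \<circ>\<^sub>p [:0,-1:]"] by simp
qed

lemma deg_diff_le:
  fixes p q :: "real poly"
  assumes "degree p \<le> n" "degree q \<le> n" "coeff p n = coeff q n" "n > 0"
  shows "degree (p - q) \<le> n - 1"
proof (rule degree_le, intro allI impI)
  fix i assume "i > n - 1"
  then have "i = n \<or> i > n" using assms(4) by linarith
  then show "coeff (p - q) i = 0"
    using assms by (auto simp: coeff_eq_0)
qed

context
  fixes \<tau> t :: real and P :: "nat \<Rightarrow> real poly"
  assumes ops: "monic_OPS \<tau> t P"
begin

lemma degP: "degree (P n) = n" using ops by (simp add: monic_OPS_def)
lemma lcP: "coeff (P n) n = 1"
proof -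
  have "degree (P n) = n \<and> lead_coeff (P n) = 1" using ops unfolding monic_OPS_def by blast
  then show ?thesis by metis
qed
lemma orth: "m \<noteq> n \<Longrightarrow> wip \<tau> t (P m) (P n) = 0" using ops by (simp add: monic_OPS_def)
lemma P_nz: "P n \<noteq> 0" using lcP[of n] by auto
lemma h_pos: "hnorm \<tau> t P n > 0" unfolding hnorm_def using P_nz by (rule wip_pos)
lemma P0: "P 0 = 1"
proof -
  have "P 0 = [:coeff (P 0) 0:]" using degree_0_id[of "P 0"] degP[of 0] by simp
  then show ?thesis using lcP[of 0] by (simp add: one_pCons)
qed

lemma span_orth:
  assumes "\<forall>j\<le>n. wip \<tau> t d (P j) = 0" "degree q \<le> n"
  shows "wip \<tau> t d q = 0"
  using assms
proof (induction n arbitrary: q)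
  case 0
  then have "q = smult (coeff q 0) (P 0)" using degree_0_id[of q] by (simp add: P0)
  then show ?case using 0 by (metis le_refl mult_zero_right wip_smult_right)
next
  case (Suc n)
  define r where "r = q - smult (coeff q (Suc n)) (P (Suc n))"
  have "degree r \<le> n" unfolding r_def
    using deg_diff_le[of q "Suc n" "smult (coeff q (Suc n)) (P (Suc n))"] Suc.prems degP lcP
    by (simp add: order_trans[OF degree_smult_le])
  then have "wip \<tau> t d r = 0" using Suc by simp
  moreover have "q = r + smult (coeff q (Suc n)) (P (Suc n))" unfolding r_def by simp
  then have "wip \<tau> t d q = wip \<tau> t d (r + smult (coeff q (Suc n)) (P (Suc n)))" by (rule arg_cong)
  ultimately show ?case using Suc.prems by (simp add: wip_add_right wip_smult_right)
qed

lemma orth_low: "degree q < n \<Longrightarrow> wip \<tau> t (P n) q = 0"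
  by (rule span_orth[of "n - 1"]) (auto simp: orth)

lemma zero_crit: "degree d \<le> n \<Longrightarrow> \<forall>j\<le>n. wip \<tau> t d (P j) = 0 \<Longrightarrow> d = 0"
  using span_orth[of n d d] wip_pos[of d \<tau> t] by auto

lemma parity: "poly (P n) (-x) = (-1)^n * poly (P n) x"
proof (cases "n = 0")
  case True then show ?thesis by (simp add: P0)
next
  case False
  define Q where "Q = smult ((-1)^n) (P n \<circ>\<^sub>p [:0,-1:])"
  have dQ: "degree Q = n" unfolding Q_def by (simp add: degree_pcompose degP)
  have "lead_coeff (P n \<circ>\<^sub>p [:0,-1:]) = (-1)^n"
    using lead_coeff_comp[of "[:0,-1:]" "P n"] by (simp add: degP lcP)
  then have cQ: "coeff Q n = 1" unfolding Q_def
    by (simp add: degree_pcompose degP flip: power_mult_distrib)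
  have "P n - Q = 0"
  proof (rule zero_crit[of _ "n - 1"])
    show "degree (P n - Q) \<le> n - 1" using deg_diff_le[of "P n" n Q] dQ cQ degP lcP False by simp
    show "\<forall>j\<le>n - 1. wip \<tau> t (P n - Q) (P j) = 0"
    proof (intro allI impI)
      fix j assume "j \<le> n - 1"
      then have j: "j < n" using False by simp
      have "wip \<tau> t Q (P j) = (-1)^n * wip \<tau> t (P n) (P j \<circ>\<^sub>p [:0,-1:])"
        unfolding Q_def by (simp add: wip_smult_left wip_reflect1)
      also have "\<dots> = 0" using j by (simp add: orth_low degree_pcompose degP)
      finally show "wip \<tau> t (P n - Q) (P j) = 0" using j by (simp add: wip_diff_left orth)
    qed
  qed
  then have "P n = Q" by simp
  then have "poly (P n) (-x) = poly Q (-x)" by simp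
  also have "\<dots> = (-1)^n * poly (P n) x" unfolding Q_def by (simp add: poly_reflect)
  finally show ?thesis .
qed

lemma odd_zero: "wip \<tau> t (pCons 0 (P n)) (P n) = 0"
proof -
  define f where "f x = poly (pCons 0 (P n)) x * poly (P n) x * omega \<tau> t x" for x
  have "f (-x) = - f x" for x
    unfolding f_def by (simp add: parity omega_even power_mult_distrib[symmetric] algebra_simps flip: power_add)
  then have "(LINT x|lborel. f x) = - (LINT x|lborel. f x)"
    using integral_reflect[of f] by simp
  then show ?thesis unfolding wip_def f_def[abs_def] by simp
qed


lemma recur:
  assumes "n \<ge> 1"
  shows "pCons 0 (P n) = P (Suc n) + smult (rbeta \<tau> t P n) (P (n-1))"
proof -
  define d where "d = pCons 0 (P n) - P (Suc n) - smult (rbeta \<tau> t P n) (P (n-1))"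
  have "d = 0"
  proof (rule zero_crit[of _ n])
    have "degree (pCons 0 (P n) - P (Suc n)) \<le> n"
      using deg_diff_le[of "pCons 0 (P n)" "Suc n" "P (Suc n)"] degP lcP P_nz
      by (simp add: degree_pCons_eq)
    moreover have "degree (smult (rbeta \<tau> t P n) (P (n-1))) \<le> n"
      by (rule order_trans[OF degree_smult_le]) (simp add: degP)
    ultimately show "degree d \<le> n" unfolding d_def by (rule degree_diff_le)
    have hn: "hnorm \<tau> t P n = rbeta \<tau> t P n * hnorm \<tau> t P (n-1)"
      unfolding rbeta_def using h_pos[of "n-1"] by simp
    show "\<forall>j\<le>n. wip \<tau> t d (P j) = 0"
    proof (intro allI impI)
      fix j assume j: "j \<le> n"
      have e: "wip \<tau> t d (P j) = wip \<tau> t (P n) (pCons 0 (P j)) - wip \<tau> t (P (Suc n)) (P j)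
          - rbeta \<tau> t P n * wip \<tau> t (P (n-1)) (P j)"
        unfolding d_def by (simp add: wip_diff_left wip_smult_left wip_X')
      consider "j = n" | "j = n - 1" | "j < n - 1" using j by linarith
      then show "wip \<tau> t d (P j) = 0"
      proof cases
        case 1
        then show ?thesis using e odd_zero[of n] wip_X'[of \<tau> t "P n" "P n"] assms
          by (simp add: orth)
      next
        case 2
        have "coeff (pCons 0 (P (n-1))) n = 1" using assms lcP[of "n-1"] by (cases n) auto
        then have "degree (pCons 0 (P (n-1)) - P n) \<le> n - 1"
          using deg_diff_le[of "pCons 0 (P (n-1))" n "P n"] degP lcP P_nz assms
          by (simp add: degree_pCons_eq del: coeff_pCons)
        then have "wip \<tau> t (P n) (pCons 0 (P (n-1)) - P n) = 0"
          using assms by (intro orth_low) simp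
        then have "wip \<tau> t (P n) (pCons 0 (P (n-1))) = hnorm \<tau> t P n"
          by (simp add: wip_diff_right hnorm_def)
        then show ?thesis using e 2 assms hn by (simp add: orth hnorm_def)
      next
        case 3
        have "wip \<tau> t (P n) (pCons 0 (P j)) = 0"
          using 3 by (intro orth_low) (simp add: degree_pCons_eq P_nz degP)
        then show ?thesis using e 3 by (simp add: orth)
      qed
    qed
  qed
  then show ?thesis unfolding d_def by (simp add: algebra_simps)
qed


lemma recS: "pCons 0 (P (Suc m)) = P (Suc (Suc m)) + smult (rbeta \<tau> t P (Suc m)) (P m)"
  using recur[of "Suc m"] by simp

lemma h_Suc: "hnorm \<tau> t P (Suc m) = rbeta \<tau> t P (Suc m) * hnorm \<tau> t P m"
  unfolding rbeta_def using h_pos[of m] by simp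

lemma wipPP: "wip \<tau> t (P m) (P n) = (if m = n then hnorm \<tau> t P n else 0)"
  by (simp add: orth hnorm_def)

lemma pC_add: "pCons 0 (p + q) = pCons 0 p + pCons (0::real) q" by simp
lemma pC_smult: "pCons 0 (smult c p) = smult c (pCons (0::real) p)" by simp


lemma T5: 
  fixes k :: nat
  defines "B \<equiv> rbeta \<tau> t P" and "n \<equiv> Suc (Suc (Suc (Suc k)))"
  shows "wip \<tau> t (pCons 0 (pCons 0 (P n))) (pCons 0 (pCons 0 (pCons 0 (P (n-1))))) =
    hnorm \<tau> t P (n-1) * B n * (B (n+2) * B (n+1) + B (n+1)^2 + 2 * B (n+1) * B n + B (n+1) * B (n-1)
      + B n ^ 2 + 2 * B n * B (n-1) + B (n-1)^2 + B (n-1) * B (n-2))"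
  unfolding n_def B_def
  apply (simp only: diff_Suc_1 recS pC_add pC_smult)
  apply (simp add: wip_add_left wip_add_right wip_smult_left wip_smult_right wipPP h_Suc)
  apply (simp add: algebra_simps power2_eq_square)
  done

lemma T3: 
  fixes k :: nat
  defines "B \<equiv> rbeta \<tau> t P" and "n \<equiv> Suc (Suc (Suc (Suc k)))"
  shows "wip \<tau> t (pCons 0 (pCons 0 (P n))) (pCons 0 (P (n-1))) =
    hnorm \<tau> t P (n-1) * B n * (B (n-1) + B n + B (n+1))"
  unfolding n_def B_def
  apply (simp only: diff_Suc_1 recS pC_add pC_smult)
  apply (simp add: wip_add_left wip_add_right wip_smult_left wip_smult_right wipPP h_Suc)
  apply (simp add: algebra_simps power2_eq_square)
  done

lemma T1: 
  fixes k :: nat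
  defines "B \<equiv> rbeta \<tau> t P" and "n \<equiv> Suc (Suc (Suc (Suc k)))"
  shows "wip \<tau> t (pCons 0 (P n)) (P (n-1)) = hnorm \<tau> t P (n-1) * B n"
  unfolding n_def B_def
  apply (simp only: diff_Suc_1 recS pC_add pC_smult)
  apply (simp add: wip_add_left wip_add_right wip_smult_left wip_smult_right wipPP h_Suc)
  done


lemma Vp_mult: "Vp \<tau> t * p = smult 6 (pCons 0 (pCons 0 (pCons 0 (pCons 0 (pCons 0 p)))))
   - smult (4*\<tau>) (pCons 0 (pCons 0 (pCons 0 p))) - smult (2*t) (pCons 0 p)"
  by (simp add: Vp_def algebra_simps smult_add_right)

lemma string_eq:
  fixes k :: nat
  defines "B \<equiv> rbeta \<tau> t P" and "n \<equiv> Suc (Suc (Suc (Suc k)))"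
  shows "real n = B n * (6 * (B (n+2) * B (n+1) + B (n+1)^2 + 2 * B (n+1) * B n + B (n+1) * B (n-1)
      + B n ^ 2 + 2 * B n * B (n-1) + B (n-1)^2 + B (n-1) * B (n-2))
      - 4 * \<tau> * (B (n-1) + B n + B (n+1)) - 2 * t)"
proof -
  have wip1: "wip \<tau> t (p * q) 1 = wip \<tau> t p q" for p q by (simp add: wip_poly)
  have "wip \<tau> t (pderiv (P n * P (n-1))) 1 = wip \<tau> t (P n * P (n-1) * Vp \<tau> t) 1"
    using IBP[of "P n * P (n-1)" \<tau> t] by (simp add: wip_poly)
  then have "wip \<tau> t (P n) (pderiv (P (n-1))) + wip \<tau> t (pderiv (P n)) (P (n-1))
      = wip \<tau> t (P n) (Vp \<tau> t * P (n-1))"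
    by (simp add: pderiv_mult wip_add_left wip1 ac_simps)
  moreover have "wip \<tau> t (P n) (Vp \<tau> t * P (n-1)) = wip \<tau> t (Vp \<tau> t * P n) (P (n-1))"
    by (simp add: wip_poly ac_simps)
  ultimately have ibp: "wip \<tau> t (P n) (pderiv (P (n-1))) + wip \<tau> t (P (n-1)) (pderiv (P n))
      = wip \<tau> t (Vp \<tau> t * P n) (P (n-1))"
    using wip_sym[of \<tau> t "pderiv (P n)" "P (n-1)"] by simp
  have z: "wip \<tau> t (P n) (pderiv (P (n-1))) = 0"
    by (rule orth_low) (simp add: degree_pderiv degP n_def)
  define e where "e = pderiv (P n) - smult (real n) (P (n-1))"
  have ce: "coeff (pderiv (P n)) (n-1) = real n" using lcP[of n] by (simp add: coeff_pderiv n_def)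
  have "degree e \<le> n - 1 - 1" unfolding e_def
    by (rule deg_diff_le) (use ce lcP[of "n-1"] in \<open>simp_all add: degree_pderiv degP n_def\<close>)
  then have "wip \<tau> t (P (n-1)) e = 0" by (intro orth_low) (simp add: n_def)
  then have pd: "wip \<tau> t (P (n-1)) (pderiv (P n)) = real n * hnorm \<tau> t P (n-1)"
    unfolding e_def by (simp add: wip_diff_right wip_smult_right hnorm_def)
  have t5: "wip \<tau> t (pCons 0 (pCons 0 (P n))) (pCons 0 (pCons 0 (pCons 0 (P (n-1))))) =
    hnorm \<tau> t P (n-1) * B n * (B (n+2) * B (n+1) + B (n+1)^2 + 2 * B (n+1) * B n + B (n+1) * B (n-1)
      + B n ^ 2 + 2 * B n * B (n-1) + B (n-1)^2 + B (n-1) * B (n-2))"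
    unfolding n_def B_def by (rule T5)
  have t3: "wip \<tau> t (pCons 0 (pCons 0 (P n))) (pCons 0 (P (n-1))) =
    hnorm \<tau> t P (n-1) * B n * (B (n-1) + B n + B (n+1))"
    unfolding n_def B_def by (rule T3)
  have t1: "wip \<tau> t (pCons 0 (P n)) (P (n-1)) = hnorm \<tau> t P (n-1) * B n"
    unfolding n_def B_def by (rule T1)
  have "wip \<tau> t (Vp \<tau> t * P n) (P (n-1)) =
      6 * wip \<tau> t (pCons 0 (pCons 0 (P n))) (pCons 0 (pCons 0 (pCons 0 (P (n-1)))))
    - 4 * \<tau> * wip \<tau> t (pCons 0 (pCons 0 (P n))) (pCons 0 (P (n-1)))
    - 2 * t * wip \<tau> t (pCons 0 (P n)) (P (n-1))"
    unfolding Vp_mult by (simp add: wip_diff_left wip_smult_left wip_X')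
  also have "\<dots> = hnorm \<tau> t P (n-1) * (B n * (6 * (B (n+2) * B (n+1) + B (n+1)^2 + 2 * B (n+1) * B n + B (n+1) * B (n-1)
      + B n ^ 2 + 2 * B n * B (n-1) + B (n-1)^2 + B (n-1) * B (n-2))
      - 4 * \<tau> * (B (n-1) + B n + B (n+1)) - 2 * t))"
    unfolding t5 t3 t1 by (simp add: algebra_simps)
  finally have "real n * hnorm \<tau> t P (n-1) = hnorm \<tau> t P (n-1) * (B n * (6 * (B (n+2) * B (n+1) + B (n+1)^2 + 2 * B (n+1) * B n + B (n+1) * B (n-1)
      + B n ^ 2 + 2 * B n * B (n-1) + B (n-1)^2 + B (n-1) * B (n-2))
      - 4 * \<tau> * (B (n-1) + B n + B (n+1)) - 2 * t))"
    using ibp z pd by simp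
  then show ?thesis using h_pos[of "n-1"] by simp
qed

end



lemma Q_low:
  fixes m c x1 x2 x4 x5 :: real
  assumes "0 \<le> m" "m \<le> x1" "m \<le> x2" "m \<le> x4" "m \<le> x5" "0 \<le> c"
  shows "c*(c^2 + 4*m*c + 5*m^2) \<le> c*(x5*x4 + x4^2 + 2*x4*c + x4*x2 + c^2 + 2*c*x2 + x2^2 + x2*x1)"
proof (rule mult_left_mono[OF _ assms(6)])
  have "m*m \<le> x5*x4" "m*m \<le> x4*x4" "m*c \<le> x4*c" "m*m \<le> x4*x2" "c*m \<le> c*x2" "m*m \<le> x2*x2" "m*m \<le> x2*x1"
    using assms by (auto intro!: mult_mono mult_left_mono mult_right_mono)
  then show "c^2 + 4*m*c + 5*m^2 \<le> x5*x4 + x4^2 + 2*x4*c + x4*x2 + c^2 + 2*c*x2 + x2^2 + x2*x1"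
    by (simp add: power2_eq_square algebra_simps)
qed

lemma Q_up:
  fixes m c x1 x2 x4 x5 :: real
  assumes "0 \<le> x1" "0 \<le> x2" "0 \<le> x4" "0 \<le> x5" "x1 \<le> m" "x2 \<le> m" "x4 \<le> m" "x5 \<le> m" "0 \<le> c"
  shows "c*(x5*x4 + x4^2 + 2*x4*c + x4*x2 + c^2 + 2*c*x2 + x2^2 + x2*x1) \<le> c*(c^2 + 4*m*c + 5*m^2)"
proof (rule mult_left_mono[OF _ assms(9)])
  have "x5*x4 \<le> m*m" "x4*x4 \<le> m*m" "x4*c \<le> m*c" "x4*x2 \<le> m*m" "c*x2 \<le> c*m" "x2*x2 \<le> m*m" "x2*x1 \<le> m*m"
    using assms by (auto intro!: mult_mono mult_left_mono mult_right_mono)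
  then show "x5*x4 + x4^2 + 2*x4*c + x4*x2 + c^2 + 2*c*x2 + x2^2 + x2*x1 \<le> c^2 + 4*m*c + 5*m^2"
    by (simp add: power2_eq_square algebra_simps)
qed

lemma filterlim_ge: "(\<And>k. k \<le> p k) \<Longrightarrow> filterlim (p :: nat \<Rightarrow> nat) sequentially sequentially"
  unfolding filterlim_at_top by (metis eventually_sequentiallyI le_trans)

lemma key:
  fixes u :: "nat \<Rightarrow> real" and a b :: real
  assumes a: "a > 0" and lo: "\<And>n. a \<le> u n" and hi: "\<And>n. u n \<le> b"
  and F: "(\<lambda>n. u (n+3) * (u (n+5) * u (n+4) + u (n+4)^2 + 2 * u (n+4) * u (n+3) + u (n+4) * u (n+2)
        + u (n+3)^2 + 2 * u (n+3) * u (n+2) + u (n+2)^2 + u (n+2) * u (n+1))) \<longlonglongrightarrow> 1/6"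
  shows "\<exists>L. u \<longlonglongrightarrow> L \<and> 60 * L^3 = 1 \<and> L > 0"
proof -
  define Fn where "Fn n = u (n+3) * (u (n+5) * u (n+4) + u (n+4)^2 + 2 * u (n+4) * u (n+3) + u (n+4) * u (n+2)
        + u (n+3)^2 + 2 * u (n+3) * u (n+2) + u (n+2)^2 + u (n+2) * u (n+1))" for n
  have F': "Fn \<longlonglongrightarrow> 1/6" using F unfolding Fn_def[abs_def] .
  define M where "M k = (SUP n\<in>{k..}. u n)" for k
  define m where "m k = (INF n\<in>{k..}. u n)" for k
  have bA: "bdd_above (u ` {k..})" for k by (rule bdd_aboveI2[where M=b]) (rule hi)
  have bB: "bdd_below (u ` {k..})" for k by (rule bdd_belowI2[where m=a]) (rule lo)
  have uM: "u n \<le> M k" if "k \<le> n" for n k unfolding M_def using that bA by (intro cSUP_upper) auto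
  have mu: "m k \<le> u n" if "k \<le> n" for n k unfolding m_def using that bB by (intro cINF_lower) auto
  have Mb: "M k \<le> b" for k unfolding M_def using hi by (intro cSUP_least) auto
  have ma: "a \<le> m k" for k unfolding m_def using lo by (intro cINF_greatest) auto
  have Mm: "m k \<le> M k" for k using uM[of k k] mu[of k k] by simp
  have Mdec: "M k' \<le> M k" if "k \<le> k'" for k k' unfolding M_def using that bA
    by (intro cSUP_subset_mono) auto
  have minc: "m k \<le> m k'" if "k \<le> k'" for k k' unfolding m_def using that bB
    by (intro cINF_superset_mono) auto
  define L where "L = Inf (range M)"
  define l where "l = Sup (range m)"
  have Mlim: "M \<longlonglongrightarrow> L" unfolding L_def
  proof (rule LIMSEQ_decseq_INF)
    show "bdd_below (range M)" by (rule bdd_belowI2[where m=a]) (use Mm ma in \<open>auto intro: order_trans\<close>)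
  qed (use Mdec in \<open>auto simp: monotone_on_def\<close>)
  have mlim: "m \<longlonglongrightarrow> l" unfolding l_def
  proof (rule LIMSEQ_incseq_SUP)
    show "bdd_above (range m)" by (rule bdd_aboveI2[where M=b]) (use Mm Mb in \<open>auto intro: order_trans\<close>)
  qed (use minc in \<open>auto simp: monotone_on_def\<close>)
  have lL: "l \<le> L" using Mlim mlim Mm by (intro LIMSEQ_le) auto
  have al: "a \<le> l" using mlim ma by (intro LIMSEQ_le_const) auto
  have Mlim3: "(\<lambda>k. M (k+3)) \<longlonglongrightarrow> L" using Mlim by (rule LIMSEQ_ignore_initial_segment)
  have mlim3: "(\<lambda>k. m (k+3)) \<longlonglongrightarrow> l" using mlim by (rule LIMSEQ_ignore_initial_segment)
  have inv: "(\<lambda>k. 1 / (real k + 1)) \<longlonglongrightarrow> 0" by real_asymp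
  have "\<forall>k. \<exists>n. k+3 \<le> n \<and> M (k+3) - 1/(real k+1) < u n"
  proof
    fix k
    have "M (k+3) - 1/(real k+1) < M (k+3)" by simp
    then show "\<exists>n. k+3 \<le> n \<and> M (k+3) - 1/(real k+1) < u n"
      unfolding M_def[of "k+3"] using less_cSUP_iff[of "{k+3..}" u] bA by auto
  qed
  then obtain nk where nk: "\<And>k. k+3 \<le> nk k" "\<And>k. M (k+3) - 1/(real k+1) < u (nk k)"
    by metis
  have unk: "(\<lambda>k. u (nk k)) \<longlonglongrightarrow> L"
  proof (rule tendsto_sandwich[of "\<lambda>k. M (k+3) - 1/(real k+1)" _ _ "\<lambda>k. M (k+3)"])
    show "\<forall>\<^sub>F k in sequentially. M (k+3) - 1/(real k+1) \<le> u (nk k)" by (intro always_eventually allI less_imp_le nk(2))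
    show "\<forall>\<^sub>F k in sequentially. u (nk k) \<le> M (k+3)" by (intro always_eventually allI uM nk(1))
    show "(\<lambda>k. M (k+3) - 1/(real k+1)) \<longlonglongrightarrow> L" using tendsto_diff[OF Mlim3 inv] by simp
  qed (rule Mlim3)
  have Fp: "(\<lambda>k. Fn (nk k - 3)) \<longlonglongrightarrow> 1/6"
    by (rule filterlim_compose[OF F' filterlim_ge]) (use nk(1) in \<open>(metis add.commute le_diff_conv2 le_add1 le_trans)\<close>)
  have up1: "L * (L^2 + 4*l*L + 5*l^2) \<le> 1/6"
  proof (rule LIMSEQ_le[OF _ Fp])
    show "(\<lambda>k. u (nk k) * (u (nk k)^2 + 4 * m k * u (nk k) + 5 * m k ^2)) \<longlonglongrightarrow> L * (L^2 + 4*l*L + 5*l^2)"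
      by (intro tendsto_intros unk mlim)
    show "\<exists>N. \<forall>k\<ge>N. u (nk k) * (u (nk k)^2 + 4 * m k * u (nk k) + 5 * m k ^2) \<le> Fn (nk k - 3)"
    proof (intro exI allI impI)
      fix k :: nat
      define p where "p = nk k - 3"
      have pk: "k \<le> p" "p + 3 = nk k" using nk(1)[of k] unfolding p_def by auto
      have eq: "Fn (nk k - 3) = u (p+3) * (u (p+5) * u (p+4) + u (p+4)^2 + 2 * u (p+4) * u (p+3) + u (p+4) * u (p+2)
        + u (p+3)^2 + 2 * u (p+3) * u (p+2) + u (p+2)^2 + u (p+2) * u (p+1))"
        unfolding p_def[symmetric] Fn_def by (rule refl)
      have "u (p+3) * (u (p+3)^2 + 4 * m k * u (p+3) + 5 * m k ^2) \<le> u (p+3) * (u (p+5) * u (p+4) + u (p+4)^2 + 2 * u (p+4) * u (p+3) + u (p+4) * u (p+2)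
        + u (p+3)^2 + 2 * u (p+3) * u (p+2) + u (p+2)^2 + u (p+2) * u (p+1))"
        by (rule Q_low) (use mu[of k "p+1"] mu[of k "p+2"] mu[of k "p+4"] mu[of k "p+5"] pk(1) ma[of k] a lo[of "p+3"] in auto)
      then show "u (nk k) * (u (nk k)^2 + 4 * m k * u (nk k) + 5 * m k ^2) \<le> Fn (nk k - 3)"
        unfolding eq pk(2) .
    qed
  qed
  have "\<forall>k. \<exists>n. k+3 \<le> n \<and> u n < m (k+3) + 1/(real k+1)"
  proof
    fix k
    have "m (k+3) < m (k+3) + 1/(real k+1)" by simp
    have "\<exists>x\<in>{k+3..}. u x < m (k+3) + 1/(real k+1)"
      using cINF_less_iff[of "{k+3..}" u "m (k+3) + 1/(real k+1)"] bB unfolding m_def by auto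
    then show "\<exists>n. k+3 \<le> n \<and> u n < m (k+3) + 1/(real k+1)" by auto
  qed
  then obtain qk where qk: "\<And>k. k+3 \<le> qk k" "\<And>k. u (qk k) < m (k+3) + 1/(real k+1)"
    by metis
  have uqk: "(\<lambda>k. u (qk k)) \<longlonglongrightarrow> l"
  proof (rule tendsto_sandwich[of "\<lambda>k. m (k+3)" _ _ "\<lambda>k. m (k+3) + 1/(real k+1)"])
    show "\<forall>\<^sub>F k in sequentially. u (qk k) \<le> m (k+3) + 1/(real k+1)" by (intro always_eventually allI less_imp_le qk(2))
    show "\<forall>\<^sub>F k in sequentially. m (k+3) \<le> u (qk k)" by (intro always_eventually allI mu qk(1))
    show "(\<lambda>k. m (k+3) + 1/(real k+1)) \<longlonglongrightarrow> l" using tendsto_add[OF mlim3 inv] by simp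
  qed (rule mlim3)
  have Fq: "(\<lambda>k. Fn (qk k - 3)) \<longlonglongrightarrow> 1/6"
    by (rule filterlim_compose[OF F' filterlim_ge]) (use qk(1) in \<open>(metis add.commute le_diff_conv2 le_add1 le_trans)\<close>)
  have lo1: "1/6 \<le> l * (l^2 + 4*L*l + 5*L^2)"
  proof (rule LIMSEQ_le[OF Fq])
    show "(\<lambda>k. u (qk k) * (u (qk k)^2 + 4 * M k * u (qk k) + 5 * M k ^2)) \<longlonglongrightarrow> l * (l^2 + 4*L*l + 5*L^2)"
      by (intro tendsto_intros uqk Mlim)
    show "\<exists>N. \<forall>k\<ge>N. Fn (qk k - 3) \<le> u (qk k) * (u (qk k)^2 + 4 * M k * u (qk k) + 5 * M k ^2)"
    proof (intro exI allI impI)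
      fix k :: nat
      define p where "p = qk k - 3"
      have pk: "k \<le> p" "p + 3 = qk k" using qk(1)[of k] unfolding p_def by auto
      have eq: "Fn (qk k - 3) = u (p+3) * (u (p+5) * u (p+4) + u (p+4)^2 + 2 * u (p+4) * u (p+3) + u (p+4) * u (p+2)
        + u (p+3)^2 + 2 * u (p+3) * u (p+2) + u (p+2)^2 + u (p+2) * u (p+1))"
        unfolding p_def[symmetric] Fn_def by (rule refl)
      have nn: "0 \<le> u n" for n using lo[of n] a by linarith
      have "u (p+3) * (u (p+5) * u (p+4) + u (p+4)^2 + 2 * u (p+4) * u (p+3) + u (p+4) * u (p+2)
        + u (p+3)^2 + 2 * u (p+3) * u (p+2) + u (p+2)^2 + u (p+2) * u (p+1)) \<le> u (p+3) * (u (p+3)^2 + 4 * M k * u (p+3) + 5 * M k ^2)"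
        by (rule Q_up) (use uM[of k "p+1"] uM[of k "p+2"] uM[of k "p+4"] uM[of k "p+5"] pk(1) nn in auto)
      then show "Fn (qk k - 3) \<le> u (qk k) * (u (qk k)^2 + 4 * M k * u (qk k) + 5 * M k ^2)"
        unfolding eq pk(2) .
    qed
  qed
  have "L \<le> l"
  proof (rule ccontr)
    assume "\<not> L \<le> l"
    then have "l < L" by simp
    have "0 < l^2" using al a by simp
    then have "0 < (L - l) * (L^2 + l^2)" using \<open>l < L\<close> by (intro mult_pos_pos) (auto intro: add_nonneg_pos)
    also have "(L - l) * (L^2 + l^2) = L * (L^2 + 4*l*L + 5*l^2) - l * (l^2 + 4*L*l + 5*L^2)"
      by (simp add: algebra_simps power2_eq_square power3_eq_cube)
    finally show False using up1 lo1 by linarith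
  qed
  then have Ll: "L = l" using lL by simp
  have "u \<longlonglongrightarrow> L"
  proof (rule tendsto_sandwich[of m _ _ M])
    show "\<forall>\<^sub>F n in sequentially. m n \<le> u n" by (intro always_eventually allI mu order_refl)
    show "\<forall>\<^sub>F n in sequentially. u n \<le> M n" by (intro always_eventually allI uM order_refl)
  qed (use mlim Ll Mlim in auto)
  moreover have "60 * L^3 = 1" using up1 lo1 Ll by (simp add: algebra_simps power2_eq_square power3_eq_cube)
  moreover have "L > 0" using al a Ll by simp
  ultimately show ?thesis by blast
qed



lemma upper_step:
  fixes x y z w v \<tau> t N :: real
  assumes pos: "0 < x" "0 < y" "0 < z" "0 < w" "0 < v" and N: "0 \<le> N"
  and eq: "N = z * (6 * (v * w + w^2 + 2 * w * z + w * y + z^2 + 2 * z * y + y^2 + y * x)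
             - 4 * \<tau> * (y + z + w) - 2 * t)"
  shows "z \<le> (4 * \<bar>\<tau>\<bar> + 2 * \<bar>t\<bar> + 1) + root 3 N"
proof -
  define s where "s = y + z + w"
  define S5 where "S5 = v * w + w^2 + 2 * w * z + w * y + z^2 + 2 * z * y + y^2 + y * x"
  define K where "K = 4 * \<bar>\<tau>\<bar> + 2 * \<bar>t\<bar> + 1"
  have r0: "0 \<le> root 3 N" using N by simp
  have S5a: "S5 = s^2 - y * w + v * w + y * x" unfolding S5_def s_def by (simp add: power2_eq_square algebra_simps)
  have yw: "4 * (y * w) \<le> s^2"
  proof -
    have "0 \<le> (y - w)^2" by simp
    moreover have "(y + w)^2 \<le> s^2" unfolding s_def using pos by (intro power_mono) auto
    ultimately show ?thesis by (simp add: power2_eq_square algebra_simps)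
  qed
  have "0 \<le> v * w + y * x" using pos by simp
  then have S5b: "4 * S5 \<ge> 3 * s^2" using S5a yw by linarith
  show ?thesis
  proof (cases "s \<ge> K")
    case True
    have s1: "s \<ge> 1" using True unfolding K_def by linarith
    have "4 * \<bar>\<tau>\<bar> * s + 2 * \<bar>t\<bar> \<le> 4 * \<bar>\<tau>\<bar> * s + 2 * \<bar>t\<bar> * s"
      using s1 mult_left_mono[of 1 s "\<bar>t\<bar>"] by simp
    also have "\<dots> = (K - 1) * s" unfolding K_def by (simp add: algebra_simps)
    also have "\<dots> \<le> s * s" using True s1 by (intro mult_right_mono) auto
    finally have A: "4 * \<bar>\<tau>\<bar> * s + 2 * \<bar>t\<bar> \<le> s^2" by (simp add: power2_eq_square)
    have B1: "- 4 * \<tau> * s - 2 * t \<ge> - (4 * \<bar>\<tau>\<bar> * s + 2 * \<bar>t\<bar>)"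
    proof -
      have "\<tau> * s \<le> \<bar>\<tau>\<bar> * s" using s1 by (intro mult_right_mono) auto
      moreover have "t \<le> \<bar>t\<bar>" by simp
      ultimately show ?thesis by linarith
    qed
    have zs: "z^2 \<le> s^2" unfolding s_def using pos by (intro power_mono) auto
    have "z^2 \<le> 6 * S5 - 4 * \<tau> * s - 2 * t" using S5b A B1 zs zero_le_power2[of s] by linarith
    then have "z * z^2 \<le> z * (6 * S5 - 4 * \<tau> * s - 2 * t)" using pos by (intro mult_left_mono) auto
    also have "\<dots> = N" unfolding eq S5_def s_def by simp
    finally have "z^3 \<le> N" by (simp add: power2_eq_square power3_eq_cube)
    then have "root 3 (z^3) \<le> root 3 N" by (subst real_root_le_iff) auto
    then have "z \<le> root 3 N" using pos by (simp add: real_root_power_cancel)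
    then show ?thesis using K_def by simp
  next
    case False
    have "z \<le> s" unfolding s_def using pos by simp
    then show ?thesis using False r0 unfolding K_def by linarith
  qed
qed


lemma lower_step:
  fixes x y z w v \<tau> t N C R :: real
  assumes pos: "0 < x" "0 < y" "0 < z" "0 < w" "0 < v" and C: "0 < C" and R: "1 \<le> R"
  and bnd: "x \<le> C * R" "y \<le> C * R" "z \<le> C * R" "w \<le> C * R" "v \<le> C * R"
  and eq: "N = z * (6 * (v * w + w^2 + 2 * w * z + w * y + z^2 + 2 * z * y + y^2 + y * x)
             - 4 * \<tau> * (y + z + w) - 2 * t)"
  shows "N \<le> z * (R^2 * (60 * C^2 + 12 * \<bar>\<tau>\<bar> * C + 2 * \<bar>t\<bar>))"
proof -
  define D where "D = C * R"
  have D0: "0 < D" unfolding D_def using C R by simp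
  have p: "\<And>a b. 0 < a \<Longrightarrow> 0 < b \<Longrightarrow> a \<le> D \<Longrightarrow> b \<le> D \<Longrightarrow> a * b \<le> D * D"
    by (intro mult_mono) auto
  have S5: "v * w + w^2 + 2 * w * z + w * y + z^2 + 2 * z * y + y^2 + y * x \<le> 10 * D^2"
    using p[of v w] p[of w w] p[of w z] p[of w y] p[of z z] p[of z y] p[of y y] p[of y x] pos bnd
    unfolding D_def[symmetric] by (simp add: power2_eq_square)
  have s: "y + z + w \<le> 3 * D" using bnd unfolding D_def by simp
  have "- 4 * \<tau> * (y + z + w) \<le> 4 * \<bar>\<tau>\<bar> * (y + z + w)"
  proof -
    have "- \<tau> * (y + z + w) \<le> \<bar>\<tau>\<bar> * (y + z + w)" using pos by (intro mult_right_mono) auto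
    then show ?thesis by simp
  qed
  also have "\<dots> \<le> 4 * \<bar>\<tau>\<bar> * (3 * D)" using s by (intro mult_left_mono) auto
  finally have T: "- 4 * \<tau> * (y + z + w) \<le> 12 * \<bar>\<tau>\<bar> * D" by simp
  have t2: "- 2 * t \<le> 2 * \<bar>t\<bar>" by simp
  have "6 * (v * w + w^2 + 2 * w * z + w * y + z^2 + 2 * z * y + y^2 + y * x) - 4 * \<tau> * (y + z + w) - 2 * t
     \<le> 60 * D^2 + 12 * \<bar>\<tau>\<bar> * D + 2 * \<bar>t\<bar>"
  proof -
    define S where "S = v * w + w^2 + 2 * w * z + w * y + z^2 + 2 * z * y + y^2 + y * x"
    define s' where "s' = y + z + w"
    have "6 * S - 4 * \<tau> * s' - 2 * t \<le> 60 * D^2 + 12 * \<bar>\<tau>\<bar> * D + 2 * \<bar>t\<bar>"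
      using S5 T t2 unfolding S_def[symmetric] s'_def[symmetric] by linarith
    then show ?thesis unfolding S_def s'_def .
  qed
  also have "\<dots> \<le> R^2 * (60 * C^2 + 12 * \<bar>\<tau>\<bar> * C + 2 * \<bar>t\<bar>)"
  proof -
    have "R \<le> R^2" using R by (simp add: power2_eq_square)
    then have a: "\<bar>\<tau>\<bar> * C * R \<le> \<bar>\<tau>\<bar> * C * R^2" using C by (intro mult_left_mono) auto
    have "1 \<le> R^2" using R by (simp add: one_le_power)
    then have b: "\<bar>t\<bar> \<le> \<bar>t\<bar> * R^2" using mult_left_mono[of 1 "R^2" "\<bar>t\<bar>"] by simp
    show ?thesis using a b unfolding D_def by (simp add: power_mult_distrib algebra_simps)
  qed
  finally show ?thesis unfolding eq using pos by (intro mult_left_mono) auto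
qed

lemma lower_u:
  fixes N K2 r R z u :: real
  assumes "0 < N" "0 < K2" "0 < r" "r \<le> R" "R^3 \<le> 2 * N" "N \<le> z * (R^2 * K2)" "z = u * r" "0 < u"
  shows "1 / (2 * K2) \<le> u"
proof -
  have "z * (R^2 * K2) \<le> (u * R) * (R^2 * K2)" using assms by (intro mult_right_mono) auto
  also have "\<dots> = u * K2 * R^3" by (simp add: power2_eq_square power3_eq_cube)
  also have "\<dots> \<le> u * K2 * (2 * N)" using assms by (intro mult_left_mono) auto
  finally have "N \<le> u * K2 * (2 * N)" using assms(6) by linarith
  then have "1 \<le> u * K2 * 2" using assms(1) by (simp add: algebra_simps)
  then show ?thesis using assms by (simp add: field_simps)
qed

lemma bounded_zero:
  fixes U W :: "nat \<Rightarrow> real"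
  assumes "\<And>n. \<bar>U n\<bar> \<le> K" "W \<longlonglongrightarrow> 1"
  shows "(\<lambda>n. U n * W n - U n) \<longlonglongrightarrow> 0"
proof -
  have W0: "(\<lambda>n. W n - 1) \<longlonglongrightarrow> 0" using tendsto_diff[OF assms(2) tendsto_const[of 1]] by simp
  have "(\<lambda>n. K * \<bar>W n - 1\<bar>) \<longlonglongrightarrow> K * \<bar>0\<bar>" by (intro tendsto_intros W0)
  then have K0: "(\<lambda>n. K * \<bar>W n - 1\<bar>) \<longlonglongrightarrow> 0" by simp
  show ?thesis
  proof (rule Lim_null_comparison[OF _ K0])
    show "\<forall>\<^sub>F n in sequentially. norm (U n * W n - U n) \<le> K * \<bar>W n - 1\<bar>"
    proof (intro always_eventually allI)
      fix n
      have "norm (U n * W n - U n) = \<bar>U n\<bar> * \<bar>W n - 1\<bar>" by (simp add: abs_mult[symmetric] algebra_simps)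
      also have "\<dots> \<le> K * \<bar>W n - 1\<bar>" using assms(1) by (intro mult_right_mono) auto
      finally show "norm (U n * W n - U n) \<le> K * \<bar>W n - 1\<bar>" .
    qed
  qed
qed



lemma B_limit:
  fixes B :: "nat \<Rightarrow> real" and \<tau> t :: real
  assumes pos: "\<And>m. 0 < B m"
  and se: "\<And>n. real (n+4) = B (n+4) * (6 * (B (n+6) * B (n+5) + B (n+5)^2 + 2 * B (n+5) * B (n+4)
      + B (n+5) * B (n+3) + B (n+4)^2 + 2 * B (n+4) * B (n+3) + B (n+3)^2 + B (n+3) * B (n+2))
      - 4 * \<tau> * (B (n+3) + B (n+4) + B (n+5)) - 2 * t)"
  shows "(\<lambda>n. B (Suc n) / root 3 (real (Suc n))) \<longlonglongrightarrow> 1 / root 3 60"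
proof -
  define K where "K = 4 * \<bar>\<tau>\<bar> + 2 * \<bar>t\<bar> + 1"
  have K0: "0 \<le> K" unfolding K_def by simp
  have up4: "B (n+4) \<le> K + root 3 (real (n+4))" for n
    unfolding K_def by (rule upper_step[OF pos pos pos pos pos _ se[of n]]) simp
  define C where "C = K + 1 + B 1 + B 2 + B 3"
  have C0: "0 < C" unfolding C_def using K0 pos[of 1] pos[of 2] pos[of 3] by simp
  have upC: "B m \<le> C * root 3 (real m)" if "1 \<le> m" for m
  proof (cases "m \<ge> 4")
    case True
    then obtain n where n: "m = n + 4" by (metis add.commute le_Suc_ex)
    have r1: "1 \<le> root 3 (real m)" using that by simp
    have "B m \<le> K + root 3 (real m)" using up4[of n] n by simp
    also have "\<dots> \<le> K * root 3 (real m) + root 3 (real m)"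
      using mult_left_mono[OF r1 K0] by simp
    also have "\<dots> = (K + 1) * root 3 (real m)" by (simp add: algebra_simps)
    also have "\<dots> \<le> C * root 3 (real m)" unfolding C_def
      using pos[of 1] pos[of 2] pos[of 3] r1 by (intro mult_right_mono) auto
    finally show ?thesis .
  next
    case False
    then have "m = 1 \<or> m = 2 \<or> m = 3" using that by auto
    then have "B m \<le> C" unfolding C_def using K0 pos[of 1] pos[of 2] pos[of 3] by auto
    also have "\<dots> \<le> C * root 3 (real m)" using that C0 mult_left_mono[of 1 "root 3 (real m)" C] by simp
    finally show ?thesis .
  qed
  define u where "u n = B (Suc n) / root 3 (real (Suc n))" for n
  have rpos: "0 < root 3 (real (Suc n))" for n by simp
  have Bu: "B (Suc n) = u n * root 3 (real (Suc n))" for n unfolding u_def using rpos[of n] by simp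
  have u_pos: "0 < u n" for n unfolding u_def using pos rpos by simp
  have u_up: "u n \<le> C" for n unfolding u_def using upC[of "Suc n"] rpos[of n] by (simp add: divide_le_eq)
  define K2 where "K2 = 60 * C^2 + 12 * \<bar>\<tau>\<bar> * C + 2 * \<bar>t\<bar>"
  have K20: "0 < K2" unfolding K2_def using C0 by (simp add: add_pos_nonneg)
  have BR: "B (n+j) \<le> C * root 3 (real (n+6))" if "1 \<le> n + j" "j \<le> 6" for n j
  proof -
    have "B (n+j) \<le> C * root 3 (real (n+j))" using upC[of "n+j"] that by linarith
    also have "\<dots> \<le> C * root 3 (real (n+6))" using C0 that by (intro mult_left_mono) auto
    finally show ?thesis .
  qed
  have lowN: "1 / (2 * K2) \<le> u (n+3)" for n
  proof -
    define R where "R = root 3 (real (n+6))"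
    have R1: "1 \<le> R" unfolding R_def by simp
    have "real (n+4) \<le> B (n+4) * (R^2 * K2)" unfolding K2_def
      by (rule lower_step[OF pos pos pos pos pos C0 R1 _ _ _ _ _ se[of n]])
         (use BR[of n 2] BR[of n 3] BR[of n 4] BR[of n 5] BR[of n 6] in \<open>simp_all add: R_def\<close>)
    moreover have "R^3 = real (n+6)" unfolding R_def by simp
    moreover have "root 3 (real (n+4)) \<le> R" unfolding R_def by simp
    moreover have "B (n+4) = u (n+3) * root 3 (real (n+4))" using Bu[of "n+3"] by (simp add: add.commute)
    ultimately show ?thesis
      by (intro lower_u[of "real (n+4)" K2 "root 3 (real (n+4))" R "B (n+4)"]) (use K20 u_pos in auto)
  qed
  define a where "a = min (1 / (2 * K2)) (min (u 0) (min (u 1) (u 2)))"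
  have a0: "0 < a" unfolding a_def using K20 u_pos by simp
  have a_le: "a \<le> u n" for n
  proof (cases "n \<ge> 3")
    case True
    then obtain k where "n = k + 3" by (metis add.commute le_Suc_ex)
    then show ?thesis using lowN[of k] unfolding a_def by simp
  next
    case False
    then have "n = 0 \<or> n = 1 \<or> n = 2" by auto
    then show ?thesis unfolding a_def by auto
  qed
  have u_abs: "\<bar>u n\<bar> \<le> C" for n using u_pos[of n] u_up[of n] by simp
  have V_abs: "\<bar>u (n+i) * u (n+j) * u (n+k)\<bar> \<le> C^3" for n i j k
  proof -
    have "\<bar>u (n+i) * u (n+j) * u (n+k)\<bar> = \<bar>u (n+i)\<bar> * \<bar>u (n+j)\<bar> * \<bar>u (n+k)\<bar>" by (simp add: abs_mult)
    also have "\<dots> \<le> C * C * C" using u_abs C0 by (intro mult_mono) auto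
    finally show ?thesis by (simp add: power3_eq_cube)
  qed
  have triple: "(\<lambda>n. B (n+i+1) * B (n+j+1) * B (n+k+1) / real (n+4) - u (n+i) * u (n+j) * u (n+k)) \<longlonglongrightarrow> 0"
    if W: "(\<lambda>n. root 3 (real (n+i+1)) * root 3 (real (n+j+1)) * root 3 (real (n+k+1)) / real (n+4)) \<longlonglongrightarrow> 1"
    for i j k
  proof -
    have "(\<lambda>n. (u (n+i) * u (n+j) * u (n+k)) * (root 3 (real (n+i+1)) * root 3 (real (n+j+1)) * root 3 (real (n+k+1)) / real (n+4))
       - u (n+i) * u (n+j) * u (n+k)) \<longlonglongrightarrow> 0"
      by (rule bounded_zero[OF V_abs W])
    moreover have "B (n+i+1) * B (n+j+1) * B (n+k+1) / real (n+4) =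
        (u (n+i) * u (n+j) * u (n+k)) * (root 3 (real (n+i+1)) * root 3 (real (n+j+1)) * root 3 (real (n+k+1)) / real (n+4))" for n
      using Bu[of "n+i"] Bu[of "n+j"] Bu[of "n+k"] by simp
    ultimately show ?thesis by simp
  qed
  have t1: "(\<lambda>n. B (n+3+1) * B (n+5+1) * B (n+4+1) / real (n+4) - u (n+3) * u (n+5) * u (n+4)) \<longlonglongrightarrow> 0"
    by (rule triple) (simp only: of_nat_add of_nat_numeral of_nat_1, real_asymp)
  have t2: "(\<lambda>n. B (n+3+1) * B (n+4+1) * B (n+4+1) / real (n+4) - u (n+3) * u (n+4) * u (n+4)) \<longlonglongrightarrow> 0"
    by (rule triple) (simp only: of_nat_add of_nat_numeral of_nat_1, real_asymp)
  have t3: "(\<lambda>n. B (n+3+1) * B (n+4+1) * B (n+3+1) / real (n+4) - u (n+3) * u (n+4) * u (n+3)) \<longlonglongrightarrow> 0"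
    by (rule triple) (simp only: of_nat_add of_nat_numeral of_nat_1, real_asymp)
  have t4: "(\<lambda>n. B (n+3+1) * B (n+4+1) * B (n+2+1) / real (n+4) - u (n+3) * u (n+4) * u (n+2)) \<longlonglongrightarrow> 0"
    by (rule triple) (simp only: of_nat_add of_nat_numeral of_nat_1, real_asymp)
  have t5: "(\<lambda>n. B (n+3+1) * B (n+3+1) * B (n+3+1) / real (n+4) - u (n+3) * u (n+3) * u (n+3)) \<longlonglongrightarrow> 0"
    by (rule triple) (simp only: of_nat_add of_nat_numeral of_nat_1, real_asymp)
  have t6: "(\<lambda>n. B (n+3+1) * B (n+3+1) * B (n+2+1) / real (n+4) - u (n+3) * u (n+3) * u (n+2)) \<longlonglongrightarrow> 0"
    by (rule triple) (simp only: of_nat_add of_nat_numeral of_nat_1, real_asymp)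
  have t7: "(\<lambda>n. B (n+3+1) * B (n+2+1) * B (n+2+1) / real (n+4) - u (n+3) * u (n+2) * u (n+2)) \<longlonglongrightarrow> 0"
    by (rule triple) (simp only: of_nat_add of_nat_numeral of_nat_1, real_asymp)
  have t8: "(\<lambda>n. B (n+3+1) * B (n+2+1) * B (n+1+1) / real (n+4) - u (n+3) * u (n+2) * u (n+1)) \<longlonglongrightarrow> 0"
    by (rule triple) (simp only: of_nat_add of_nat_numeral of_nat_1, real_asymp)
  define G where "G n = B (n+4) * (B (n+6) * B (n+5) + B (n+5)^2 + 2 * B (n+5) * B (n+4)
      + B (n+5) * B (n+3) + B (n+4)^2 + 2 * B (n+4) * B (n+3) + B (n+3)^2 + B (n+3) * B (n+2)) / real (n+4)" for n
  define F where "F n = u (n+3) * (u (n+5) * u (n+4) + u (n+4)^2 + 2 * u (n+4) * u (n+3) + u (n+4) * u (n+2)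
        + u (n+3)^2 + 2 * u (n+3) * u (n+2) + u (n+2)^2 + u (n+2) * u (n+1))" for n
  have GF_eq: "G n - F n =
      (B (n+3+1) * B (n+5+1) * B (n+4+1) / real (n+4) - u (n+3) * u (n+5) * u (n+4))
    + (B (n+3+1) * B (n+4+1) * B (n+4+1) / real (n+4) - u (n+3) * u (n+4) * u (n+4))
    + 2 * (B (n+3+1) * B (n+4+1) * B (n+3+1) / real (n+4) - u (n+3) * u (n+4) * u (n+3))
    + (B (n+3+1) * B (n+4+1) * B (n+2+1) / real (n+4) - u (n+3) * u (n+4) * u (n+2))
    + (B (n+3+1) * B (n+3+1) * B (n+3+1) / real (n+4) - u (n+3) * u (n+3) * u (n+3))
    + 2 * (B (n+3+1) * B (n+3+1) * B (n+2+1) / real (n+4) - u (n+3) * u (n+3) * u (n+2))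
    + (B (n+3+1) * B (n+2+1) * B (n+2+1) / real (n+4) - u (n+3) * u (n+2) * u (n+2))
    + (B (n+3+1) * B (n+2+1) * B (n+1+1) / real (n+4) - u (n+3) * u (n+2) * u (n+1))" for n
  proof -
    have idx: "n+3+1 = n+4" "n+5+1 = n+6" "n+4+1 = n+5" "n+2+1 = n+3" "n+1+1 = n+2" by simp_all
    show ?thesis unfolding G_def F_def idx
      by (simp only: add_divide_distrib diff_divide_distrib power2_eq_square) (simp add: algebra_simps add_divide_distrib)
  qed
  have GF: "(\<lambda>n. G n - F n) \<longlonglongrightarrow> 0"
    unfolding GF_eq using tendsto_add[OF tendsto_add[OF tendsto_add[OF tendsto_add[OF tendsto_add[OF tendsto_add[OF tendsto_add[OF
      t1 t2] tendsto_mult[OF tendsto_const[of 2] t3]] t4] t5] tendsto_mult[OF tendsto_const[of 2] t6]] t7] t8] by simp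
  define E where "E n = (4 * \<tau> * B (n+4) * (B (n+3) + B (n+4) + B (n+5)) + 2 * t * B (n+4)) / real (n+4)" for n
  have GE: "6 * G n = 1 + E n" for n
  proof -
    have "real (n+4) > 0" by simp
    then show ?thesis unfolding G_def E_def using se[of n] by (simp add: field_simps)
  qed
  have E0: "E \<longlonglongrightarrow> 0"
  proof (rule Lim_null_comparison)
    define R where "R n = root 3 (real n + 6)" for n
    have "(\<lambda>n. (12 * \<bar>\<tau>\<bar> * C^2 * R n ^ 2 + 2 * \<bar>t\<bar> * C * R n) / (real n + 4)) \<longlonglongrightarrow> 0"
      unfolding R_def by real_asymp
    then show "(\<lambda>n. (12 * \<bar>\<tau>\<bar> * C^2 * R n ^ 2 + 2 * \<bar>t\<bar> * C * R n) / (real n + 4)) \<longlonglongrightarrow> 0" .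
    show "\<forall>\<^sub>F n in sequentially. norm (E n) \<le> (12 * \<bar>\<tau>\<bar> * C^2 * R n ^ 2 + 2 * \<bar>t\<bar> * C * R n) / (real n + 4)"
    proof (intro always_eventually allI)
      fix n
      have b3: "B (n+3) \<le> C * R n" "B (n+4) \<le> C * R n" "B (n+5) \<le> C * R n"
        using BR[of n 3] BR[of n 4] BR[of n 5] unfolding R_def by (simp_all add: add.commute)
      have p3: "0 < B (n+3)" "0 < B (n+4)" "0 < B (n+5)" using pos by auto
      have s3: "B (n+3) + B (n+4) + B (n+5) \<le> 3 * (C * R n)" using b3 by simp
      have "\<bar>4 * \<tau> * B (n+4) * (B (n+3) + B (n+4) + B (n+5)) + 2 * t * B (n+4)\<bar>
          \<le> 4 * \<bar>\<tau>\<bar> * B (n+4) * (B (n+3) + B (n+4) + B (n+5)) + 2 * \<bar>t\<bar> * B (n+4)"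
        using p3 by (simp add: abs_mult abs_triangle_ineq order_trans[OF abs_triangle_ineq])
      also have "\<dots> \<le> 4 * \<bar>\<tau>\<bar> * (C * R n) * (3 * (C * R n)) + 2 * \<bar>t\<bar> * (C * R n)"
        using b3 s3 p3 by (intro add_mono mult_mono mult_left_mono) auto
      also have "\<dots> = 12 * \<bar>\<tau>\<bar> * C^2 * R n ^ 2 + 2 * \<bar>t\<bar> * C * R n" by (simp add: power2_eq_square algebra_simps)
      finally show "norm (E n) \<le> (12 * \<bar>\<tau>\<bar> * C^2 * R n ^ 2 + 2 * \<bar>t\<bar> * C * R n) / (real n + 4)"
        unfolding E_def by (simp add: divide_right_mono abs_divide)
    qed
  qed
  have G6: "G \<longlonglongrightarrow> 1/6"
  proof -
    have "(\<lambda>n. (1 + E n) / 6) \<longlonglongrightarrow> (1 + 0) / (6::real)" by (intro tendsto_intros E0) simp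
    moreover have "(1 + E n) / 6 = G n" for n using GE[of n] by simp
    ultimately show ?thesis by simp
  qed
  have F6: "F \<longlonglongrightarrow> 1/6"
  proof -
    have "(\<lambda>n. G n - (G n - F n)) \<longlonglongrightarrow> 1/6 - 0" by (intro tendsto_intros G6 GF)
    then show ?thesis by simp
  qed
  obtain L where L: "u \<longlonglongrightarrow> L" "60 * L^3 = 1" "L > 0"
    using key[of a u C, OF a0 a_le u_up] F6 unfolding F_def by blast
  have "(root 3 60 * L)^3 = 1" using L(2) by (simp add: power_mult_distrib)
  then have "(root 3 60 * L)^3 = 1^3" by simp
  then have "root 3 60 * L = 1" using L(3)
    by (subst (asm) power_eq_iff_eq_base) auto
  then have "L = 1 / root 3 60" by (simp add: field_simps)
  then show ?thesis using L(1) unfolding u_def by simp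
qed


theorem lemma3p5:
  fixes \<tau> t :: real and P :: "nat \<Rightarrow> real poly"
  assumes "monic_OPS \<tau> t P"
  shows "(\<lambda>n. rbeta \<tau> t P (Suc n) / root 3 (real (Suc n)))
           \<longlonglongrightarrow> 1 / root 3 60"
proof (rule B_limit)
  fix m
  show "0 < rbeta \<tau> t P m" unfolding rbeta_def using h_pos[OF assms, of m] h_pos[OF assms, of "m-1"] by simp
next
  fix n
  show "real (n+4) = rbeta \<tau> t P (n+4) * (6 * (rbeta \<tau> t P (n+6) * rbeta \<tau> t P (n+5) + rbeta \<tau> t P (n+5)^2
      + 2 * rbeta \<tau> t P (n+5) * rbeta \<tau> t P (n+4) + rbeta \<tau> t P (n+5) * rbeta \<tau> t P (n+3)
      + rbeta \<tau> t P (n+4)^2 + 2 * rbeta \<tau> t P (n+4) * rbeta \<tau> t P (n+3) + rbeta \<tau> t P (n+3)^2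
      + rbeta \<tau> t P (n+3) * rbeta \<tau> t P (n+2))
      - 4 * \<tau> * (rbeta \<tau> t P (n+3) + rbeta \<tau> t P (n+4) + rbeta \<tau> t P (n+5)) - 2 * t)"
    using string_eq[OF assms, of n] by (simp add: numeral_eq_Suc)
qed

end
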